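(* Let $(X,d)$ be a complete metric space, $\preceq$ a partial order on $X$, and $F:X\times X\rightarrow X$ such that for every $\varepsilon>0$ there exists $\delta(\varepsilon)>0$ for which, for all $x,y,u,v\in X$, \[ x\preceq u,\ y\succeq v,\ \varepsilon\leq\tfrac{1}{2}[d(x,u)+d(y,v)]<\varepsilon+\delta(\varepsilon)\Rightarrow d(F(x,y),F(u,v))<\varepsilon. \] Suppose: (H1) $F$ has the mixed monotone property; (H2) there exist $x_{0},y_{0}\in X$ with $x_{0}\preceq F(x_{0},y_{0})$ and $y_{0}\succeq F(y_{0},x_{0})$. If either (H3) $F$ is continuous, or (H4) whenever $\{x_{n}\}$ is a nondecreasing (respectively, nonincreasing) sequence in $X$ with $x_{n}\rightarrow x$, then $x_{n}\preceq x$ (respectively, $x_{n}\succeq x$) for all $n$, then $F$ has a coupled fixed point $(x^{\ast},y^{\ast})$, i.e., $F(x^{\ast},y^{\ast})=x^{\ast}$ and $F(y^{\ast},x^{\ast})=y^{\ast}$. If in addition (H5) $X$ is $\preceq$--connected, then $x^{\ast}=y^{\ast}$, $(x^{\ast},x^{\ast})$ is the unique coupled fixed point of $F$, $x^{\ast}$ is the unique fixed point of $F$ (unique $x$ with $F(x,x)=x$), and $F^{n}(x,y)\rightarrow x^{\ast}$ as $n\rightarrow\infty$ for all $x,y\in X$.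
   Context: $F$ has the mixed monotone property if for all $x_1,x_2,y_1,y_2\in X$, $x_1\preceq x_2$ and $y_1\succeq y_2$ imply $F(x_1,y_1)\preceq F(x_2,y_2)$. $X$ is $\preceq$--connected if for every $x,y\in X$ there exist $z_0,\dots,z_n\in X$ with $z_0=x$, $z_n=y$ and $z_{i-1},z_i$ comparable (i.e., $z_{i-1}\preceq z_i$ or $z_i\preceq z_{i-1}$) for every $i\in\{1,\dots,n\}$. Iterates of $F$: with $(G\ast H)(x,y)=G(H(x,y),H(y,x))$ for $G,H:X\times X\to X$, set $F^{0}(x,y)=x$ and $F^{n+1}=F\ast F^{n}$. *)

theory Defs
  imports "HOL-Analysis.Analysis"
begin

definition mixed_monotone :: "('a \<Rightarrow> 'a \<Rightarrow> bool) \<Rightarrow> ('a \<Rightarrow> 'a \<Rightarrow> 'a) \<Rightarrow> bool" where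
  "mixed_monotone le F \<longleftrightarrow>
     (\<forall>x1 x2 y1 y2. le x1 x2 \<and> le y2 y1 \<longrightarrow> le (F x1 y1) (F x2 y2))"

definition le_comparable :: "('a \<Rightarrow> 'a \<Rightarrow> bool) \<Rightarrow> 'a \<Rightarrow> 'a \<Rightarrow> bool" where
  "le_comparable le x y \<longleftrightarrow> le x y \<or> le y x"

definition preceq_connected :: "('a \<Rightarrow> 'a \<Rightarrow> bool) \<Rightarrow> bool" where
  "preceq_connected le \<longleftrightarrow>
     (\<forall>x y. \<exists>(n::nat) (z::nat \<Rightarrow> 'a). z 0 = x \<and> z n = y \<and> (\<forall>i\<in>{1..n}. le_comparable le (z (i - 1)) (z i)))"

fun coupled_iter :: "nat \<Rightarrow> ('a \<Rightarrow> 'a \<Rightarrow> 'a) \<Rightarrow> 'a \<Rightarrow> 'a \<Rightarrow> 'a" where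
  "coupled_iter 0 F = (\<lambda>x y. x)"
| "coupled_iter (Suc n) F = (\<lambda>x y. F (coupled_iter n F x y) (coupled_iter n F y x))"

end

theory Submission
  imports Defs
begin


lemma MK_seq:
  fixes a :: "nat \<Rightarrow> real"
  assumes nn: "\<And>n. 0 \<le> a n" and dec: "\<And>n. a (Suc n) \<le> a n"
    and mk: "\<And>\<epsilon>. \<epsilon> > 0 \<Longrightarrow> \<exists>\<delta>>0. \<forall>n. \<epsilon> \<le> a n \<and> a n < \<epsilon> + \<delta> \<longrightarrow> a (Suc n) < \<epsilon>"
  shows "a \<longlonglongrightarrow> 0"
proof -
  have "decseq a" using dec by (simp add: decseq_SucI)
  then obtain L where L: "a \<longlonglongrightarrow> L" "\<forall>i. L \<le> a i"
    using decseq_convergent[of a 0] nn by blast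
  have L0: "L \<ge> 0" using L(1) nn by (meson LIMSEQ_le_const)
  have "L = 0"
  proof (rule ccontr)
    assume "L \<noteq> 0"
    with L0 have "L > 0" by simp
    from mk[OF this] obtain \<delta> where d: "\<delta> > 0" "\<forall>n. L \<le> a n \<and> a n < L + \<delta> \<longrightarrow> a (Suc n) < L" by blast
    have "eventually (\<lambda>n. a n < L + \<delta>) sequentially"
      using order_tendstoD(2)[OF L(1)] d(1) by simp
    then obtain n where "a n < L + \<delta>" by (meson eventually_sequentially order_refl)
    then have "a (Suc n) < L" using d(2) L(2) by blast
    with L(2) show False by (meson not_le)
  qed
  with L show ?thesis by simp
qed

locale MK =
  fixes le :: "'a::complete_space \<Rightarrow> 'a \<Rightarrow> bool"
    and F :: "'a \<Rightarrow> 'a \<Rightarrow> 'a"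
  assumes refl: "\<And>x. le x x"
    and trans: "\<And>x y z. le x y \<Longrightarrow> le y z \<Longrightarrow> le x z"
    and contr: "\<forall>\<epsilon>>0. \<exists>\<delta>>0. \<forall>x y u v.
        le x u \<and> le v y \<and> \<epsilon> \<le> (dist x u + dist y v) / 2 \<and> (dist x u + dist y v) / 2 < \<epsilon> + \<delta>
        \<longrightarrow> dist (F x y) (F u v) < \<epsilon>"
    and H1: "mixed_monotone le F"
begin

definition G :: "'a \<times> 'a \<Rightarrow> 'a \<times> 'a" where
  "G p = (F (fst p) (snd p), F (snd p) (fst p))"
definition R :: "'a \<times> 'a \<Rightarrow> 'a \<times> 'a \<Rightarrow> real" where
  "R p q = (dist (fst p) (fst q) + dist (snd p) (snd q)) / 2"
definition cp :: "'a \<times> 'a \<Rightarrow> 'a \<times> 'a \<Rightarrow> bool" where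
  "cp p q \<longleftrightarrow> le (fst p) (fst q) \<and> le (snd q) (snd p)"
definition comp :: "'a \<times> 'a \<Rightarrow> 'a \<times> 'a \<Rightarrow> bool" where
  "comp p q \<longleftrightarrow> cp p q \<or> cp q p"
definition links :: "'a \<times> 'a \<Rightarrow> 'a \<times> 'a \<Rightarrow> bool" where
  "links p q \<longleftrightarrow> (\<lambda>n. R ((G ^^ n) p) ((G ^^ n) q)) \<longlonglongrightarrow> 0"

lemma R_sym: "R p q = R q p" by (simp add: R_def dist_commute)
lemma R_nn: "0 \<le> R p q" by (simp add: R_def)
lemma R_tri: "R p r \<le> R p q + R q r"
  unfolding R_def using dist_triangle[of "fst p" "fst r" "fst q"] dist_triangle[of "snd p" "snd r" "snd q"]
  by (simp add: field_simps)
lemma R_0: "R p q = 0 \<longleftrightarrow> p = q"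
  unfolding R_def by (auto simp: prod_eq_iff add_nonneg_eq_0_iff)
lemma dist_fst: "dist (fst p) (fst q) \<le> 2 * R p q" by (simp add: R_def)
lemma dist_snd: "dist (snd p) (snd q) \<le> 2 * R p q" by (simp add: R_def)

lemma F_le:
  assumes "le x u" "le v y"
  shows "dist (F x y) (F u v) \<le> (dist x u + dist y v) / 2"
proof (cases "(dist x u + dist y v) / 2 = 0")
  case True
  then have "x = u" "y = v" by (simp_all add: add_nonneg_eq_0_iff)
  then show ?thesis by simp
next
  case False
  then have pos: "(dist x u + dist y v) / 2 > 0"
    by (simp add: add_nonneg_nonneg order_le_neq_trans)
  from contr[rule_format, OF pos] obtain \<delta> where "\<delta> > 0" and
    h: "\<forall>x' y' u' v'. le x' u' \<and> le v' y' \<and> (dist x u + dist y v) / 2 \<le> (dist x' u' + dist y' v') / 2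
       \<and> (dist x' u' + dist y' v') / 2 < (dist x u + dist y v) / 2 + \<delta> \<longrightarrow>
       dist (F x' y') (F u' v') < (dist x u + dist y v) / 2" by blast
  have "dist (F x y) (F u v) < (dist x u + dist y v) / 2"
    using h[rule_format, of x u v y] assms \<open>\<delta> > 0\<close> by simp
  then show ?thesis by simp
qed

lemma cp_G: "cp p q \<Longrightarrow> cp (G p) (G q)"
  using H1 unfolding cp_def G_def mixed_monotone_def by auto

lemma cp_trans: "cp p q \<Longrightarrow> cp q r \<Longrightarrow> cp p r"
  unfolding cp_def by (meson trans)

lemma G_contr: "cp p q \<Longrightarrow> R (G p) (G q) \<le> R p q"
proof -
  assume c: "cp p q"
  obtain x y where p: "p = (x, y)" by fastforce
  obtain u v where q: "q = (u, v)" by fastforce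
  have a: "le x u" "le v y" using c by (simp_all add: cp_def p q)
  have 1: "dist (F x y) (F u v) \<le> (dist x u + dist y v) / 2" using F_le a by blast
  have "dist (F v u) (F y x) \<le> (dist v y + dist u x) / 2" using F_le a by blast
  then have 2: "dist (F y x) (F v u) \<le> (dist x u + dist y v) / 2" by (simp add: dist_commute)
  show ?thesis using 1 2 by (simp add: R_def G_def p q)
qed

lemma G_MK:
  assumes "\<epsilon> > 0"
  shows "\<exists>\<delta>>0. \<forall>p q. cp p q \<and> \<epsilon> \<le> R p q \<and> R p q < \<epsilon> + \<delta> \<longrightarrow> R (G p) (G q) < \<epsilon>"
proof -
  from contr[rule_format, OF assms] obtain \<delta> where d: "\<delta> > 0" and
    h: "\<forall>x y u v. le x u \<and> le v y \<and> \<epsilon> \<le> (dist x u + dist y v) / 2 \<and> (dist x u + dist y v) / 2 < \<epsilon> + \<delta>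
        \<longrightarrow> dist (F x y) (F u v) < \<epsilon>" by blast
  have "\<forall>p q. cp p q \<and> \<epsilon> \<le> R p q \<and> R p q < \<epsilon> + \<delta> \<longrightarrow> R (G p) (G q) < \<epsilon>"
  proof (intro allI impI)
    fix p q assume c: "cp p q \<and> \<epsilon> \<le> R p q \<and> R p q < \<epsilon> + \<delta>"
    obtain x y where p: "p = (x, y)" by fastforce
    obtain u v where q: "q = (u, v)" by fastforce
    have a: "le x u" "le v y" "\<epsilon> \<le> (dist x u + dist y v) / 2" "(dist x u + dist y v) / 2 < \<epsilon> + \<delta>"
      using c by (simp_all add: cp_def R_def p q)
    have 1: "dist (F x y) (F u v) < \<epsilon>" using h a by blast
    have "dist (F v u) (F y x) < \<epsilon>" using h[rule_format, of v y x u] a by (simp add: dist_commute add.commute)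
    then have 2: "dist (F y x) (F v u) < \<epsilon>" by (simp add: dist_commute)
    show "R (G p) (G q) < \<epsilon>" using 1 2 by (simp add: R_def G_def p q)
  qed
  with d show ?thesis by blast
qed

lemma comp_sym: "comp p q \<Longrightarrow> comp q p" unfolding comp_def by blast
lemma comp_G: "comp p q \<Longrightarrow> comp (G p) (G q)" unfolding comp_def using cp_G by blast
lemma comp_contr: "comp p q \<Longrightarrow> R (G p) (G q) \<le> R p q"
  unfolding comp_def using G_contr R_sym by metis
lemma comp_MK:
  assumes "\<epsilon> > 0"
  shows "\<exists>\<delta>>0. \<forall>p q. comp p q \<and> \<epsilon> \<le> R p q \<and> R p q < \<epsilon> + \<delta> \<longrightarrow> R (G p) (G q) < \<epsilon>"
  using G_MK[OF assms] unfolding comp_def by (metis R_sym)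

lemma comp_iter: "comp p q \<Longrightarrow> comp ((G ^^ n) p) ((G ^^ n) q)"
  by (induction n) (auto intro: comp_G)

lemma links_comp: assumes "comp p q" shows "links p q"
  unfolding links_def
proof (rule MK_seq)
  show "\<And>n. 0 \<le> R ((G ^^ n) p) ((G ^^ n) q)" by (rule R_nn)
  show "\<And>n. R ((G ^^ Suc n) p) ((G ^^ Suc n) q) \<le> R ((G ^^ n) p) ((G ^^ n) q)"
    using comp_contr comp_iter[OF assms] by simp
  fix \<epsilon> :: real assume "\<epsilon> > 0"
  from comp_MK[OF this] obtain \<delta> where "\<delta> > 0"
    "\<forall>p q. comp p q \<and> \<epsilon> \<le> R p q \<and> R p q < \<epsilon> + \<delta> \<longrightarrow> R (G p) (G q) < \<epsilon>" by blast
  show "\<exists>\<delta>>0. \<forall>n. \<epsilon> \<le> R ((G ^^ n) p) ((G ^^ n) q) \<and> R ((G ^^ n) p) ((G ^^ n) q) < \<epsilon> + \<delta> \<longrightarrow>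
             R ((G ^^ Suc n) p) ((G ^^ Suc n) q) < \<epsilon>"
  proof (intro exI[of _ \<delta>] conjI allI impI)
    show "\<delta> > 0" by fact
    fix n assume "\<epsilon> \<le> R ((G ^^ n) p) ((G ^^ n) q) \<and> R ((G ^^ n) p) ((G ^^ n) q) < \<epsilon> + \<delta>"
    then show "R ((G ^^ Suc n) p) ((G ^^ Suc n) q) < \<epsilon>"
      using \<open>\<forall>p q. comp p q \<and> \<epsilon> \<le> R p q \<and> R p q < \<epsilon> + \<delta> \<longrightarrow> R (G p) (G q) < \<epsilon>\<close>[rule_format, of "(G ^^ n) p" "(G ^^ n) q"] comp_iter[OF assms, of n] by simp
  qed
qed

lemma links_sym: "links p q \<Longrightarrow> links q p"
  unfolding links_def by (simp add: R_sym)

lemma links_trans: assumes "links p q" "links q r" shows "links p r"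
  unfolding links_def
proof (rule real_tendsto_sandwich[where f="\<lambda>_. 0" and h="\<lambda>n. R ((G ^^ n) p) ((G ^^ n) q) + R ((G ^^ n) q) ((G ^^ n) r)"])
  show "\<forall>\<^sub>F n in sequentially. 0 \<le> R ((G ^^ n) p) ((G ^^ n) r)" by (simp add: R_nn)
  show "\<forall>\<^sub>F n in sequentially. R ((G ^^ n) p) ((G ^^ n) r) \<le> R ((G ^^ n) p) ((G ^^ n) q) + R ((G ^^ n) q) ((G ^^ n) r)"
    by (simp add: R_tri)
  show "(\<lambda>_. 0) \<longlonglongrightarrow> (0::real)" by simp
  show "(\<lambda>n. R ((G ^^ n) p) ((G ^^ n) q) + R ((G ^^ n) q) ((G ^^ n) r)) \<longlonglongrightarrow> 0"
    using tendsto_add[OF assms[unfolded links_def]] by simp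
qed

end


context MK
begin

lemma cp_refl: "cp p p" by (simp add: cp_def refl)

lemma cp_iter: "cp p q \<Longrightarrow> cp ((G ^^ n) p) ((G ^^ n) q)"
  by (induction n) (auto intro: cp_G)

lemma seq_cauchy:
  fixes s :: "nat \<Rightarrow> 'a \<times> 'a"
  assumes mono: "\<And>n m. n \<le> m \<Longrightarrow> cp (s n) (s m)"
    and sS: "\<And>n. s (Suc n) = G (s n)"
    and a0: "(\<lambda>n. R (s n) (s (Suc n))) \<longlonglongrightarrow> 0"
    and e: "\<epsilon> > 0"
  shows "\<exists>N. \<forall>m\<ge>N. \<forall>m'\<ge>N. R (s m) (s m') < \<epsilon>"
proof -
  define e where "e = \<epsilon> / 4"
  have e0: "e > 0" using \<open>\<epsilon> > 0\<close> by (simp add: e_def)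
  from G_MK[OF e0] obtain \<delta>0 where d0: "\<delta>0 > 0"
    "\<forall>p q. cp p q \<and> e \<le> R p q \<and> R p q < e + \<delta>0 \<longrightarrow> R (G p) (G q) < e" by blast
  define \<delta> where "\<delta> = min \<delta>0 e"
  have d: "\<delta> > 0" "\<delta> \<le> \<delta>0" "\<delta> \<le> e" using d0 e0 by (auto simp: \<delta>_def)
  have "\<delta>/2 > 0" using d by simp
  from LIMSEQ_D[OF a0 this] obtain N where N: "\<And>n. n \<ge> N \<Longrightarrow> R (s n) (s (Suc n)) < \<delta>/2"
    using R_nn by fastforce
  have claim: "R (s N) (s (N + k)) < e + \<delta>/2" for k
  proof (induction k)
    case 0
    then show ?case using R_0[of "s N" "s N"] e0 d by simp
  next
    case (Suc k)
    have c: "cp (s N) (s (N + k))" using mono by simp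
    have "R (s (Suc N)) (s (Suc (N + k))) < e"
    proof (cases "e \<le> R (s N) (s (N + k))")
      case True
      then show ?thesis using d0(2)[rule_format, of "s N" "s (N+k)"] c Suc.IH d sS by simp
    next
      case False
      then show ?thesis using G_contr[OF c] sS by simp
    qed
    moreover have "R (s N) (s (N + Suc k)) \<le> R (s N) (s (Suc N)) + R (s (Suc N)) (s (Suc (N + k)))"
      using R_tri by simp
    moreover have "R (s N) (s (Suc N)) < \<delta>/2" using N by simp
    ultimately show ?case by simp
  qed
  have "\<forall>m\<ge>N. \<forall>m'\<ge>N. R (s m) (s m') < \<epsilon>"
  proof (intro allI impI)
    fix m m' assume "m \<ge> N" "m' \<ge> N"
    then obtain k k' where "m = N + k" "m' = N + k'" using le_Suc_ex by blast
    then have "R (s N) (s m) < e + \<delta>/2" "R (s N) (s m') < e + \<delta>/2" using claim by auto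
    moreover have "R (s m) (s m') \<le> R (s N) (s m) + R (s N) (s m')"
      using R_tri[of "s m" "s m'" "s N"] R_sym[of "s m" "s N"] by linarith
    ultimately show "R (s m) (s m') < \<epsilon>" using d unfolding e_def by linarith
  qed
  then show ?thesis by blast
qed

lemma exists_cfp:
  assumes p0: "cp p0 (G p0)"
    and H34: "continuous_on UNIV (\<lambda>p. F (fst p) (snd p)) \<or>
      ((\<forall>s x. (\<forall>m n. m \<le> n \<longrightarrow> le (s m) (s n)) \<and> s \<longlonglongrightarrow> x \<longrightarrow> (\<forall>n. le (s n) x)) \<and>
       (\<forall>s x. (\<forall>m n. m \<le> n \<longrightarrow> le (s n) (s m)) \<and> s \<longlonglongrightarrow> x \<longrightarrow> (\<forall>n. le x (s n))))"
  shows "\<exists>xs ys. F xs ys = xs \<and> F ys xs = ys"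
proof -
  define s where "s n = (G ^^ n) p0" for n
  have sS: "s (Suc n) = G (s n)" for n by (simp add: s_def)
  have step: "cp (s n) (s (Suc n))" for n
    using cp_iter[OF p0, of n] by (simp add: s_def funpow_swap1)
  have mono: "cp (s n) (s m)" if "n \<le> m" for n m
  proof -
    have "cp (s n) (s (n + k))" for k
    proof (induction k)
      case 0 then show ?case by (simp add: cp_refl)
    next
      case (Suc k) then show ?case using cp_trans[OF Suc.IH step[of "n+k"]] by simp
    qed
    then show ?thesis using that le_Suc_ex by blast
  qed
  have a0: "(\<lambda>n. R (s n) (s (Suc n))) \<longlonglongrightarrow> 0"
    using links_comp[of p0 "G p0"] p0 unfolding links_def comp_def
    by (simp add: s_def funpow_swap1)
  have C1: "Cauchy (\<lambda>n. fst (s n))"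
  proof (rule metric_CauchyI)
    fix e :: real assume "e > 0"
    then have "e/2 > 0" by simp
    from seq_cauchy[OF mono sS a0 this] obtain N where N: "\<forall>m\<ge>N. \<forall>m'\<ge>N. R (s m) (s m') < e/2"
      by blast
    show "\<exists>M. \<forall>m\<ge>M. \<forall>n\<ge>M. dist (fst (s m)) (fst (s n)) < e"
    proof (intro exI[of _ N] allI impI)
      fix m n assume "m \<ge> N" "n \<ge> N"
      then have "R (s m) (s n) < e/2" using N by blast
      then show "dist (fst (s m)) (fst (s n)) < e" using dist_fst[of "s m" "s n"] by linarith
    qed
  qed
  have C2: "Cauchy (\<lambda>n. snd (s n))"
  proof (rule metric_CauchyI)
    fix e :: real assume "e > 0"
    then have "e/2 > 0" by simp
    from seq_cauchy[OF mono sS a0 this] obtain N where N: "\<forall>m\<ge>N. \<forall>m'\<ge>N. R (s m) (s m') < e/2"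
      by blast
    show "\<exists>M. \<forall>m\<ge>M. \<forall>n\<ge>M. dist (snd (s m)) (snd (s n)) < e"
    proof (intro exI[of _ N] allI impI)
      fix m n assume "m \<ge> N" "n \<ge> N"
      then have "R (s m) (s n) < e/2" using N by blast
      then show "dist (snd (s m)) (snd (s n)) < e" using dist_snd[of "s m" "s n"] by linarith
    qed
  qed
  obtain xs where xs: "(\<lambda>n. fst (s n)) \<longlonglongrightarrow> xs"
    using C1 Cauchy_convergent_iff convergent_def by blast
  obtain ys where ys: "(\<lambda>n. snd (s n)) \<longlonglongrightarrow> ys"
    using C2 Cauchy_convergent_iff convergent_def by blast
  have xs1: "(\<lambda>n. F (fst (s n)) (snd (s n))) \<longlonglongrightarrow> xs"
    using LIMSEQ_Suc[OF xs] by (simp add: sS G_def)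
  have ys1: "(\<lambda>n. F (snd (s n)) (fst (s n))) \<longlonglongrightarrow> ys"
    using LIMSEQ_Suc[OF ys] by (simp add: sS G_def)
  from H34 show ?thesis
  proof
    assume cont: "continuous_on UNIV (\<lambda>p. F (fst p) (snd p))"
    have "(\<lambda>n. F (fst (s n)) (snd (s n))) \<longlonglongrightarrow> F xs ys"
      using continuous_on_tendsto_compose[OF cont tendsto_Pair[OF xs ys]] by simp
    moreover have "(\<lambda>n. F (snd (s n)) (fst (s n))) \<longlonglongrightarrow> F ys xs"
      using continuous_on_tendsto_compose[OF cont tendsto_Pair[OF ys xs]] by simp
    ultimately show ?thesis using xs1 ys1 LIMSEQ_unique by blast
  next
    assume H4: "(\<forall>s x. (\<forall>m n. m \<le> n \<longrightarrow> le (s m) (s n)) \<and> s \<longlonglongrightarrow> x \<longrightarrow> (\<forall>n. le (s n) x)) \<and>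
       (\<forall>s x. (\<forall>m n. m \<le> n \<longrightarrow> le (s n) (s m)) \<and> s \<longlonglongrightarrow> x \<longrightarrow> (\<forall>n. le x (s n)))"
    have "\<forall>m n. m \<le> n \<longrightarrow> le (fst (s m)) (fst (s n))" using mono by (simp add: cp_def)
    then have l1: "le (fst (s n)) xs" for n
      using H4[THEN conjunct1, rule_format, OF conjI[OF _ xs]] by blast
    have "\<forall>m n. m \<le> n \<longrightarrow> le (snd (s n)) (snd (s m))" using mono by (simp add: cp_def)
    then have l2: "le ys (snd (s n))" for n
      using H4[THEN conjunct2, rule_format, OF conjI[OF _ ys]] by blast
    have cpn: "cp (s n) (xs, ys)" for n using l1 l2 by (simp add: cp_def)
    have R0: "(\<lambda>n. R (s n) (xs, ys)) \<longlonglongrightarrow> 0"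
    proof -
      have "(\<lambda>n. (dist (fst (s n)) xs + dist (snd (s n)) ys) / 2) \<longlonglongrightarrow> (0 + 0) / 2"
        by (intro tendsto_intros tendsto_dist_iff[THEN iffD1, OF xs] tendsto_dist_iff[THEN iffD1, OF ys]) simp
      then show ?thesis by (simp add: R_def)
    qed
    have RG: "(\<lambda>n. R (G (s n)) (G (xs, ys))) \<longlonglongrightarrow> 0"
    proof (rule real_tendsto_sandwich[where f="\<lambda>_. 0" and h="\<lambda>n. R (s n) (xs, ys)"])
      show "\<forall>\<^sub>F n in sequentially. 0 \<le> R (G (s n)) (G (xs, ys))" by (simp add: R_nn)
      show "\<forall>\<^sub>F n in sequentially. R (G (s n)) (G (xs, ys)) \<le> R (s n) (xs, ys)"
        using G_contr[OF cpn] by simp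
    qed (simp_all add: R0)
    have RG2: "(\<lambda>n. 2 * R (G (s n)) (G (xs, ys))) \<longlonglongrightarrow> 0"
      using tendsto_mult[OF tendsto_const[of "2::real"] RG] by simp
    have "(\<lambda>n. dist (fst (G (s n))) (F xs ys)) \<longlonglongrightarrow> 0"
    proof (rule real_tendsto_sandwich[where f="\<lambda>_. 0" and h="\<lambda>n. 2 * R (G (s n)) (G (xs, ys))"])
      show "\<forall>\<^sub>F n in sequentially. 0 \<le> dist (fst (G (s n))) (F xs ys)" by simp
      have "dist (fst (G (s n))) (F xs ys) \<le> 2 * R (G (s n)) (G (xs, ys))" for n
        using dist_fst[of "G (s n)" "G (xs, ys)"] by (simp add: G_def)
      then show "\<forall>\<^sub>F n in sequentially. dist (fst (G (s n))) (F xs ys) \<le> 2 * R (G (s n)) (G (xs, ys))"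
        by simp
    qed (simp_all add: RG2)
    then have "(\<lambda>n. F (fst (s n)) (snd (s n))) \<longlonglongrightarrow> F xs ys"
      by (subst tendsto_dist_iff) (simp add: G_def)
    moreover have "(\<lambda>n. dist (snd (G (s n))) (F ys xs)) \<longlonglongrightarrow> 0"
    proof (rule real_tendsto_sandwich[where f="\<lambda>_. 0" and h="\<lambda>n. 2 * R (G (s n)) (G (xs, ys))"])
      show "\<forall>\<^sub>F n in sequentially. 0 \<le> dist (snd (G (s n))) (F ys xs)" by simp
      have "dist (snd (G (s n))) (F ys xs) \<le> 2 * R (G (s n)) (G (xs, ys))" for n
        using dist_snd[of "G (s n)" "G (xs, ys)"] by (simp add: G_def)
      then show "\<forall>\<^sub>F n in sequentially. dist (snd (G (s n))) (F ys xs) \<le> 2 * R (G (s n)) (G (xs, ys))"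
        by simp
    qed (simp_all add: RG2)
    then have "(\<lambda>n. F (snd (s n)) (fst (s n))) \<longlonglongrightarrow> F ys xs"
      by (subst tendsto_dist_iff) (simp add: G_def)
    ultimately show ?thesis using xs1 ys1 LIMSEQ_unique by blast
  qed
qed

end


context MK
begin

lemma iter_ci: "(G ^^ n) (x, y) = (coupled_iter n F x y, coupled_iter n F y x)"
  by (induction n) (simp_all add: G_def)

lemma links_refl: "links p p"
proof -
  have "R p' p' = 0" for p' using R_0 by simp
  then show ?thesis unfolding links_def by simp
qed

lemma fixed_iter: "G p = p \<Longrightarrow> (G ^^ n) p = p"
  by (induction n) simp_all

lemma links_all:
  assumes conn: "preceq_connected le"
  shows "links p q"
proof -
  have L1: "links (x, y) (u, y)" for x u y
  proof -
    obtain n :: nat and z :: "nat \<Rightarrow> 'a" where z: "z 0 = x" "z n = u" "\<forall>i\<in>{1..n}. le_comparable le (z (i - 1)) (z i)"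
      using conn[unfolded preceq_connected_def, rule_format, of x u] by blast
    have "i \<le> n \<longrightarrow> links (z 0, y) (z i, y)" for i
    proof (induction i)
      case 0 then show ?case by (simp add: links_refl)
    next
      case (Suc i)
      show ?case
      proof
        assume "Suc i \<le> n"
        then have "le_comparable le (z i) (z (Suc i))" using z(3)[rule_format, of "Suc i"] \<open>Suc i \<le> n\<close> by simp
        then have "comp (z i, y) (z (Suc i), y)"
          unfolding le_comparable_def comp_def cp_def using refl by auto
        moreover have "links (z 0, y) (z i, y)" using Suc.IH \<open>Suc i \<le> n\<close> by simp
        ultimately show "links (z 0, y) (z (Suc i), y)"
          using links_comp links_trans by blast
      qed
    qed
    then show ?thesis using z by auto
  qed
  have L2: "links (u, y) (u, v)" for u y v
  proof -
    obtain n :: nat and z :: "nat \<Rightarrow> 'a" where z: "z 0 = y" "z n = v" "\<forall>i\<in>{1..n}. le_comparable le (z (i - 1)) (z i)"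
      using conn[unfolded preceq_connected_def, rule_format, of y v] by blast
    have "i \<le> n \<longrightarrow> links (u, z 0) (u, z i)" for i
    proof (induction i)
      case 0 then show ?case by (simp add: links_refl)
    next
      case (Suc i)
      show ?case
      proof
        assume "Suc i \<le> n"
        then have "le_comparable le (z i) (z (Suc i))" using z(3)[rule_format, of "Suc i"] \<open>Suc i \<le> n\<close> by simp
        then have "comp (u, z i) (u, z (Suc i))"
          unfolding le_comparable_def comp_def cp_def using refl by auto
        moreover have "links (u, z 0) (u, z i)" using Suc.IH \<open>Suc i \<le> n\<close> by simp
        ultimately show "links (u, z 0) (u, z (Suc i))"
          using links_comp links_trans by blast
      qed
    qed
    then show ?thesis using z by auto
  qed
  obtain x y where p: "p = (x, y)" by fastforce
  obtain u v where q: "q = (u, v)" by fastforce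
  show ?thesis using links_trans[OF L1[of x y u] L2[of u y v]] p q by simp
qed

lemma links_fixed: "links p q \<Longrightarrow> G p = p \<Longrightarrow> G q = q \<Longrightarrow> p = q"
proof -
  assume l: "links p q" and gp: "G p = p" and gq: "G q = q"
  have "(\<lambda>n. R p q) \<longlonglongrightarrow> 0" using l unfolding links_def fixed_iter[OF gp] fixed_iter[OF gq] .
  then have "R p q = 0" by (simp add: LIMSEQ_const_iff)
  then show "p = q" using R_0 by simp
qed

lemma part2:
  assumes conn: "preceq_connected le" and fx: "F xs ys = xs" "F ys xs = ys"
  shows "\<exists>xs. (\<forall>u v. (F u v = u \<and> F v u = v) \<longleftrightarrow> (u = xs \<and> v = xs)) \<and>
            (\<forall>u. F u u = u \<longleftrightarrow> u = xs) \<and>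
            (\<forall>x y. (\<lambda>n. coupled_iter n F x y) \<longlonglongrightarrow> xs)"
proof -
  have g1: "G (xs, ys) = (xs, ys)" "G (ys, xs) = (ys, xs)" using fx by (simp_all add: G_def)
  have "(ys, xs) = (xs, ys)" by (rule links_fixed[OF links_all[OF conn] g1(2) g1(1)])
  then have eq: "ys = xs" by (rule Pair_inject)
  have gx: "G (xs, xs) = (xs, xs)" using g1(1) unfolding eq .
  have A: "(F u v = u \<and> F v u = v) \<longleftrightarrow> (u = xs \<and> v = xs)" for u v
  proof
    assume "F u v = u \<and> F v u = v"
    then have "G (u, v) = (u, v)" by (simp add: G_def)
    then have "(u, v) = (xs, xs)" by (rule links_fixed[OF links_all[OF conn] _ gx])
    then show "u = xs \<and> v = xs" by (rule Pair_inject) (rule conjI)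
  next
    assume "u = xs \<and> v = xs"
    then have "u = xs" "v = xs" by auto
    moreover have "F xs xs = xs" using fx(1) unfolding eq .
    ultimately show "F u v = u \<and> F v u = v" by simp
  qed
  have B: "F u u = u \<longleftrightarrow> u = xs" for u using A[of u u] by simp
  have C: "(\<lambda>n. coupled_iter n F x y) \<longlonglongrightarrow> xs" for x y
  proof -
    have l: "(\<lambda>n. R ((G ^^ n) (x, y)) (xs, xs)) \<longlonglongrightarrow> 0"
      using links_all[OF conn, of "(x, y)" "(xs, xs)"] unfolding links_def fixed_iter[OF gx] .
    have "(\<lambda>n. dist (coupled_iter n F x y) xs) \<longlonglongrightarrow> 0"
    proof (rule real_tendsto_sandwich[where f="\<lambda>_. 0" and h="\<lambda>n. 2 * R ((G ^^ n) (x, y)) (xs, xs)"])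
      have "dist (coupled_iter n F x y) xs \<le> 2 * R ((G ^^ n) (x, y)) (xs, xs)" for n
        using dist_fst[of "(G ^^ n) (x, y)" "(xs, xs)"] by (simp add: iter_ci)
      then show "\<forall>\<^sub>F n in sequentially. dist (coupled_iter n F x y) xs \<le> 2 * R ((G ^^ n) (x, y)) (xs, xs)"
        by simp
      show "(\<lambda>n. 2 * R ((G ^^ n) (x, y)) (xs, xs)) \<longlonglongrightarrow> 0"
        using tendsto_mult[OF tendsto_const[of "2::real"] l] by simp
    qed simp_all
    then show ?thesis by (rule tendsto_dist_iff[THEN iffD2])
  qed
  show ?thesis by (intro exI[of _ xs] conjI allI A B C)
qed

end

theorem theorem7:
  fixes le :: "'a::complete_space \<Rightarrow> 'a \<Rightarrow> bool"
    and F :: "'a \<Rightarrow> 'a \<Rightarrow> 'a"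
  assumes refl: "\<And>x. le x x"
    and antisym: "\<And>x y. le x y \<Longrightarrow> le y x \<Longrightarrow> x = y"
    and trans: "\<And>x y z. le x y \<Longrightarrow> le y z \<Longrightarrow> le x z"
    and contr: "\<forall>\<epsilon>>0. \<exists>\<delta>>0. \<forall>x y u v.
        le x u \<and> le v y \<and> \<epsilon> \<le> (dist x u + dist y v) / 2 \<and> (dist x u + dist y v) / 2 < \<epsilon> + \<delta>
        \<longrightarrow> dist (F x y) (F u v) < \<epsilon>"
    and H1: "mixed_monotone le F"
    and H2: "\<exists>x0 y0. le x0 (F x0 y0) \<and> le (F y0 x0) y0"
    and H34: "continuous_on UNIV (\<lambda>p. F (fst p) (snd p)) \<or>
      ((\<forall>s x. (\<forall>m n. m \<le> n \<longrightarrow> le (s m) (s n)) \<and> s \<longlonglongrightarrow> x \<longrightarrow> (\<forall>n. le (s n) x)) \<and>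
       (\<forall>s x. (\<forall>m n. m \<le> n \<longrightarrow> le (s n) (s m)) \<and> s \<longlonglongrightarrow> x \<longrightarrow> (\<forall>n. le x (s n))))"
  shows "(\<exists>xs ys. F xs ys = xs \<and> F ys xs = ys) \<and>
    (preceq_connected le \<longrightarrow>
      (\<exists>xs. (\<forall>u v. (F u v = u \<and> F v u = v) \<longleftrightarrow> (u = xs \<and> v = xs)) \<and>
            (\<forall>u. F u u = u \<longleftrightarrow> u = xs) \<and>
            (\<forall>x y. (\<lambda>n. coupled_iter n F x y) \<longlonglongrightarrow> xs)))"
proof -
  interpret M: MK le F using refl trans contr H1 by unfold_locales
  from H2 obtain x0 y0 where h: "le x0 (F x0 y0)" "le (F y0 x0) y0" by blast
  have "M.cp (x0, y0) (M.G (x0, y0))" using h by (simp add: M.cp_def M.G_def)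
  from M.exists_cfp[OF this H34] obtain xs ys where fx: "F xs ys = xs" "F ys xs = ys" by blast
  have 1: "\<exists>xs ys. F xs ys = xs \<and> F ys xs = ys" using fx by blast
  have 2: "preceq_connected le \<longrightarrow>
      (\<exists>xs. (\<forall>u v. (F u v = u \<and> F v u = v) \<longleftrightarrow> (u = xs \<and> v = xs)) \<and>
            (\<forall>u. F u u = u \<longleftrightarrow> u = xs) \<and>
            (\<forall>x y. (\<lambda>n. coupled_iter n F x y) \<longlonglongrightarrow> xs))"
    by (intro impI) (rule M.part2[OF _ fx(1) fx(2)])
  show ?thesis using 1 2 by (rule conjI)
qed

end
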